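(* Let $b\in C^1([0,\infty))$ satisfy $b(t)>0$ for all $t\ge0$ and $b_0:=\limsup_{t\to\infty}\frac{|b'(t)|}{b(t)^2}<1$. Define for $t\ge0$ $$\Phi(t)=\int_t^\infty\exp\Big(-\int_t^sb(\sigma)\,d\sigma\Big)\,ds.$$ Then $\Phi$ is well defined (finite) and: (i) $\Phi(0)=B_0:=\int_0^\infty\exp(-\int_0^sb(\sigma)d\sigma)\,ds$, and $\Phi'(t)-b(t)\Phi(t)=-1$ for every $t\ge0$; (ii) there exist constants $t_0>0$, $B_1>0$, $B_2>0$ such that $\frac{B_1}{b(t)}\le\Phi(t)\le\frac{B_2}{b(t)}$ for every $t\ge t_0$; (iii) for every $t\ge t_0$, $|\Phi'(t)|\le\frac{1+b_0}{1-b_0}$; in particular $\Phi'$ is bounded on $[0,\infty)$. *)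

theory Defs
  imports "HOL-Analysis.Analysis"
begin

definition Phi :: "(real \<Rightarrow> real) \<Rightarrow> real \<Rightarrow> real" where
  "Phi b t = integral {t..} (\<lambda>s. exp (- integral {t..s} b))"

definition b0_ereal :: "(real \<Rightarrow> real) \<Rightarrow> (real \<Rightarrow> real) \<Rightarrow> ereal" where
  "b0_ereal b b' = Limsup at_top (\<lambda>t. ereal (\<bar>b' t\<bar> / (b t)\<^sup>2))"

end

theory Submission
  imports Defs
begin

lemma at_Ici_eq:
  fixes t a :: real assumes "a \<le> t"
  shows "at t within {a..t+1} = at t within {a..}"
  by (rule at_within_nhd[of _ "{t-1<..<t+1}"]) (use assms in auto)

lemma at_Ici_nontriv:
  fixes t a :: real assumes "a \<le> t"
  shows "at t within {a..} \<noteq> bot"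
proof
  assume h: "at t within {a..} = bot"
  have "at t within {t..t+1} \<le> at t within {a..}"
    by (rule at_le) (use assms in auto)
  moreover have "at t within {t..t+1} = at_right t"
    by (rule at_within_Icc_at_right) simp
  ultimately have "at_right t \<le> (bot :: real filter)" using h by simp
  then show False using trivial_limit_at_right_real[of t] by (simp add: bot_unique)
qed

lemma FTC_Ici:
  fixes g :: "real \<Rightarrow> real"
  assumes "continuous_on {a..} g" "a \<le> t"
  shows "((\<lambda>x. integral {a..x} g) has_real_derivative g t) (at t within {a..})"
proof -
  have "continuous_on {a..t+1} g" using assms(1) by (rule continuous_on_subset) auto
  then have "((\<lambda>x. integral {a..x} g) has_real_derivative g t) (at t within {a..t+1})"
    by (rule integral_has_real_derivative) (use assms in auto)
  then show ?thesis using at_Ici_eq[OF assms(2)] by simp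
qed

lemma at_pos_Ici:
  fixes t :: real assumes "0 < t"
  shows "at t within {0..} = at t"
proof -
  have "interior {0::real..} = {0<..}" by (rule interior_Ici[of "-1"]) simp
  then show ?thesis using assms by (intro at_within_interior) simp
qed


theorem lemma2p2:
  fixes b b' :: "real \<Rightarrow> real"
  assumes deriv_b: "\<And>t. t \<ge> 0 \<Longrightarrow> (b has_real_derivative b' t) (at t within {0..})"
    and cont_b': "continuous_on {0..} b'"
    and pos: "\<And>t. t \<ge> 0 \<Longrightarrow> b t > 0"
    and b0_lt: "b0_ereal b b' < 1"
  shows "(\<forall>t\<ge>0. (\<lambda>s. exp (- integral {t..s} b)) integrable_on {t..})
    \<and> Phi b 0 = integral {0..} (\<lambda>s. exp (- integral {0..s} b))
    \<and> (\<forall>t\<ge>0. (Phi b has_real_derivative (b t * Phi b t - 1)) (at t within {0..}))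
    \<and> (\<exists>t0>0. \<exists>B1>0. \<exists>B2>0.
         (\<forall>t\<ge>t0. B1 / b t \<le> Phi b t \<and> Phi b t \<le> B2 / b t)
       \<and> (\<forall>t\<ge>t0. \<bar>deriv (Phi b) t\<bar> \<le> (1 + real_of_ereal (b0_ereal b b')) / (1 - real_of_ereal (b0_ereal b b'))))
    \<and> (\<exists>M. \<forall>t\<ge>0. \<forall>D. (Phi b has_real_derivative D) (at t within {0..}) \<longrightarrow> \<bar>D\<bar> \<le> M)"
proof -
  have b0_ge: "0 \<le> b0_ereal b b'"
    unfolding b0_ereal_def by (rule le_Limsup) auto
  define b0 where "b0 = real_of_ereal (b0_ereal b b')"
  have b0e: "b0_ereal b b' = ereal b0"
    using b0_ge b0_lt unfolding b0_def by (cases "b0_ereal b b'") auto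
  have b0_01: "0 \<le> b0" "b0 < 1" using b0_ge b0_lt b0e by auto
  define c where "c = (1 + b0) / 2"
  have c_01: "0 < c" "c < 1" "b0 < c" using b0_01 unfolding c_def by auto
  have "eventually (\<lambda>t. ereal (\<bar>b' t\<bar> / (b t)\<^sup>2) < ereal c) at_top"
    by (rule Limsup_lessD) (use b0e c_01 in \<open>simp add: b0_ereal_def[symmetric]\<close>)
  then obtain T0 where T0: "\<And>t. t \<ge> T0 \<Longrightarrow> \<bar>b' t\<bar> / (b t)\<^sup>2 < c"
    unfolding eventually_at_top_linorder by auto
  define T where "T = max T0 1"
  have T_pos: "T > 0" unfolding T_def by simp
  have bT: "\<And>t. t \<ge> T \<Longrightarrow> \<bar>b' t\<bar> / (b t)\<^sup>2 < c" using T0 unfolding T_def by auto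

  have contb: "continuous_on {0..} b"
    by (rule DERIV_continuous_on[OF deriv_b]) auto
  define B where "B x = integral {0..x} b" for x
  define E where "E s = exp (- B s)" for s
  define G where "G s = integral {0..s} E" for s
  define F where "F s = E s / b s" for s
  have B_der: "(B has_real_derivative b t) (at t within {0..})" if "t \<ge> 0" for t
    unfolding B_def by (rule FTC_Ici[OF contb that])
  have contB: "continuous_on {0..} B" by (rule DERIV_continuous_on[OF B_der]) auto
  have E_der: "(E has_real_derivative (- b t * E t)) (at t within {0..})" if "t \<ge> 0" for t
    unfolding E_def
    by (rule derivative_eq_intros B_der that refl | simp)+
  have contE: "continuous_on {0..} E" by (rule DERIV_continuous_on[OF E_der]) auto
  have E_pos: "E s > 0" for s unfolding E_def by simp
  have G_der: "(G has_real_derivative E t) (at t within {0..})" if "t \<ge> 0" for t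
    unfolding G_def by (rule FTC_Ici[OF contE that])
  have intE: "E integrable_on {t..s}" if "0 \<le> t" for t s
    by (rule integrable_continuous_real, rule continuous_on_subset[OF contE]) (use that in auto)
  have intb: "b integrable_on {t..s}" if "0 \<le> t" for t s
    by (rule integrable_continuous_real, rule continuous_on_subset[OF contb]) (use that in auto)
  have B_int: "integral {t..s} b = B s - B t" if "0 \<le> t" "t \<le> s" for t s
    using Henstock_Kurzweil_Integration.integral_combine[OF that(1) that(2) intb[of 0 s, OF order_refl]] that unfolding B_def by auto
  have G_int: "integral {t..s} E = G s - G t" if "0 \<le> t" "t \<le> s" for t s
    using Henstock_Kurzweil_Integration.integral_combine[OF that(1) that(2) intE[of 0 s, OF order_refl]] that unfolding G_def by auto
  have G_mono: "G t \<le> G s" if "0 \<le> t" "t \<le> s" for t s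
  proof -
    have "0 \<le> integral {t..s} E"
      by (rule integral_nonneg[OF intE]) (use that E_pos in \<open>auto simp: less_imp_le\<close>)
    then show ?thesis using G_int[OF that] by simp
  qed
  have G0: "G 0 = 0" unfolding G_def by simp

  have der_at: "(f has_real_derivative D) (at x)" if "(f has_real_derivative D) (at x within {0..})" "x > 0"
    for f D x using that at_pos_Ici[OF that(2)] by simp
  have key: "(1 - c) * (G X - G t) \<le> F t - F X" if "T \<le> t" "t \<le> X" for t X
  proof -
    define H where "H x = (1 - c) * G x + F x" for x
    have "H X \<le> H t"
    proof (rule DERIV_nonpos_imp_nonincreasing[OF that(2)])
      fix x assume x: "t \<le> x" "x \<le> X"
      have x0: "x > 0" "x \<ge> T" using x that T_pos by auto
      have bx: "b x > 0" using pos x0 by auto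
      have dF: "(F has_real_derivative ((- b x * E x) * b x - E x * b' x) / (b x * b x)) (at x)"
        unfolding F_def[abs_def]
        using DERIV_divide[OF der_at[OF E_der] der_at[OF deriv_b]] x0 bx by auto
      have dH: "(H has_real_derivative ((1 - c) * E x + ((- b x * E x) * b x - E x * b' x) / (b x * b x))) (at x)"
        unfolding H_def[abs_def]
        using DERIV_add[OF DERIV_cmult[OF der_at[OF G_der], of x "1 - c"] dF] x0 by auto
      have eq: "(1 - c) * E x + ((- b x * E x) * b x - E x * b' x) / (b x * b x)
          = E x * (- c - b' x / (b x)\<^sup>2)"
        using bx by (simp add: field_simps power2_eq_square)
      have "- b' x / (b x)\<^sup>2 \<le> \<bar>b' x\<bar> / (b x)\<^sup>2"
        by (rule divide_right_mono) auto
      then have "- c - b' x / (b x)\<^sup>2 \<le> 0" using bT[OF x0(2)] by simp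
      then have "E x * (- c - b' x / (b x)\<^sup>2) \<le> 0"
        using E_pos[of x] by (simp add: mult_nonneg_nonpos less_imp_le)
      then show "\<exists>y. (H has_real_derivative y) (at x) \<and> y \<le> 0" using dH eq by auto
    qed
    then show ?thesis unfolding H_def by (simp add: algebra_simps)
  qed
  have F_pos: "F s > 0" if "s \<ge> 0" for s using E_pos pos[OF that] unfolding F_def by simp
  define K where "K = G T + F T / (1 - c)"
  have G_le_K: "G X \<le> K" if "X \<ge> 0" for X
  proof (cases "X \<le> T")
    case True
    then have "G X \<le> G T" using G_mono that by auto
    also have "\<dots> \<le> K" unfolding K_def using F_pos[of T] T_pos c_01 by simp
    finally show ?thesis .
  next
    case False
    have "(1 - c) * (G X - G T) \<le> F T" using key[of T X] F_pos[of X] False T_pos by simp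
    then have "G X - G T \<le> F T / (1 - c)" using c_01 by (simp add: field_simps)
    then show ?thesis unfolding K_def by simp
  qed
  have G_nonneg: "G X \<ge> 0" if "X \<ge> 0" for X using G_mono[of 0 X] that G0 by simp
  have intE_inf: "E integrable_on {t..} \<and> ((\<lambda>k. G (t + real k) - G t) \<longlonglongrightarrow> integral {t..} E)"
    if t0: "t \<ge> 0" for t
  proof -
    define f where "f k x = (if x \<in> {t..t + real k} then E x else 0)" for k :: nat and x
    have int_eq: "integral {t..} (f k) = G (t + real k) - G t" for k
    proof -
      have "integral {t..} (f k) = integral ({t..t + real k} \<inter> {t..}) E"
        unfolding f_def by (rule integral_restrict_Int)
      also have "{t..t + real k} \<inter> {t..} = {t..t + real k}" by auto
      finally show ?thesis using G_int[of t "t + real k"] t0 by simp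
    qed
    have "E integrable_on {t..} \<and> ((\<lambda>k. integral {t..} (f k)) \<longlonglongrightarrow> integral {t..} E)"
    proof (rule monotone_convergence_increasing)
      fix k
      show "f k integrable_on {t..}" unfolding f_def
        by (subst integrable_restrict_Int) (use intE[OF t0, of "t + real k"] in \<open>simp add: Int_absorb2\<close>)
    next
      fix k x assume "x \<in> {t..}"
      then show "f k x \<le> f (Suc k) x" unfolding f_def using E_pos[of x] by (auto simp: less_imp_le)
    next
      fix x assume x: "x \<in> {t..}"
      have "eventually (\<lambda>k. f k x = E x) sequentially"
        unfolding eventually_sequentially
      proof (intro exI allI impI)
        fix k assume "nat \<lceil>x - t\<rceil> \<le> k"
        then have "x - t \<le> real k" by linarith
        then show "f k x = E x" unfolding f_def using x by auto
      qed
      then show "(\<lambda>k. f k x) \<longlonglongrightarrow> E x" by (rule tendsto_eventually)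
    next
      show "bounded (range (\<lambda>k. integral {t..} (f k)))"
        unfolding bounded_real int_eq
      proof (intro exI ballI)
        fix y assume "y \<in> range (\<lambda>k. G (t + real k) - G t)"
        then obtain k where k: "y = G (t + real k) - G t" by auto
        have "G t \<le> G (t + real k)" using G_mono t0 by simp
        moreover have "G (t + real k) \<le> K" using G_le_K t0 by simp
        ultimately show "\<bar>y\<bar> \<le> K + G t" using k G_nonneg[OF t0] by simp
      qed
    qed
    then show ?thesis unfolding int_eq .
  qed

  define I0 where "I0 = integral {0..} E"
  have tail: "integral {t..} E = I0 - G t" if t0: "t \<ge> 0" for t
  proof -
    have h1: "(E has_integral G t) {0..t}" unfolding G_def using intE[of 0 t] by auto
    have h2: "(E has_integral integral {t..} E) {t..}" using intE_inf[OF t0] by auto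
    have "{0..t} \<inter> {t..} = {t}" using t0 by auto
    then have "negligible ({0..t} \<inter> {t..})" by simp
    from has_integral_Un[OF h1 h2 this]
    have "(E has_integral (G t + integral {t..} E)) ({0..t} \<union> {t..})" .
    moreover have "{0..t} \<union> {t..} = {0::real..}" using t0 by auto
    ultimately have "(E has_integral (G t + integral {t..} E)) {0..}" by simp
    then show ?thesis unfolding I0_def by (simp add: integral_unique)
  qed
  have pt_eq: "exp (- integral {t..s} b) = exp (B t) * E s" if "0 \<le> t" "s \<in> {t..}" for t s
    using B_int[of t s] that unfolding E_def by (simp add: exp_add[symmetric])
  have part1: "(\<lambda>s. exp (- integral {t..s} b)) integrable_on {t..}" if t0: "t \<ge> 0" for t
  proof -
    have "(\<lambda>s. exp (B t) * E s) integrable_on {t..}"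
      using intE_inf[OF t0] by simp
    then show ?thesis using integrable_cong[of "{t..}" "\<lambda>s. exp (- integral {t..s} b)", OF pt_eq[OF t0]] by simp
  qed
  have Phi_eq: "Phi b t = exp (B t) * (I0 - G t)" if t0: "t \<ge> 0" for t
  proof -
    have "Phi b t = integral {t..} (\<lambda>s. exp (B t) * E s)"
      unfolding Phi_def by (rule integral_cong) (rule pt_eq[OF t0])
    also have "\<dots> = exp (B t) * integral {t..} E" by simp
    finally show ?thesis using tail[OF t0] by simp
  qed
  have Phi_der: "(Phi b has_real_derivative (b t * Phi b t - 1)) (at t within {0..})" if t0: "t \<ge> 0" for t
  proof -
    have d: "((\<lambda>x. exp (B x) * (I0 - G x)) has_real_derivative
        (exp (B t) * b t * (I0 - G t) + exp (B t) * (- E t))) (at t within {0..})"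
      by (rule derivative_eq_intros B_der G_der t0 refl | simp)+
    have "exp (B t) * b t * (I0 - G t) + exp (B t) * (- E t) = b t * Phi b t - 1"
      unfolding Phi_eq[OF t0] E_def by (simp add: exp_minus field_simps)
    with d have d2: "((\<lambda>x. exp (B x) * (I0 - G x)) has_real_derivative (b t * Phi b t - 1)) (at t within {0..})"
      by simp
    show ?thesis
      by (rule has_field_derivative_transform_within[OF d2 zero_less_one]) (use t0 Phi_eq in auto)
  qed

  have EB: "exp (B t) * E t = 1" for t unfolding E_def by (simp add: exp_minus)
  have upper: "Phi b t \<le> (1 / (1 - c)) / b t" if tT: "t \<ge> T" for t
  proof -
    have t0: "t \<ge> 0" using tT T_pos by simp
    have "integral {t..} E \<le> F t / (1 - c)"
    proof (rule LIMSEQ_le_const2)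
      show "(\<lambda>k. G (t + real k) - G t) \<longlonglongrightarrow> integral {t..} E" using intE_inf[OF t0] by simp
      show "\<exists>N. \<forall>k\<ge>N. G (t + real k) - G t \<le> F t / (1 - c)"
      proof (intro exI allI impI)
        fix k :: nat
        have "(1 - c) * (G (t + real k) - G t) \<le> F t - F (t + real k)" using key[OF tT, of "t + real k"] by simp
        also have "\<dots> \<le> F t" using F_pos[of "t + real k"] t0 by simp
        finally show "G (t + real k) - G t \<le> F t / (1 - c)" using c_01 by (simp add: field_simps)
      qed
    qed
    then have "Phi b t \<le> exp (B t) * (F t / (1 - c))"
      unfolding Phi_eq[OF t0] tail[OF t0, symmetric] by (rule mult_left_mono) simp
    also have "\<dots> = (exp (B t) * E t) / (b t * (1 - c))" unfolding F_def by simp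
    also have "\<dots> = (1 / (1 - c)) / b t" unfolding EB by simp
    finally show ?thesis .
  qed
  have lower: "(exp (-1) / 2) / b t \<le> Phi b t" if tT: "t \<ge> T" for t
  proof -
    have t0: "t \<ge> 0" using tT T_pos by simp
    have bt: "b t > 0" using pos t0 by simp
    define h where "h = 1 / (2 * b t)"
    have h_pos: "h > 0" unfolding h_def using bt by simp
    have inv_b: "1 / b t - (s - t) \<le> 1 / b s" if s: "t \<le> s" for s
    proof -
      define R where "R x = 1 / b x + x" for x
      have "R t \<le> R s"
      proof (rule DERIV_nonneg_imp_nondecreasing[OF s])
        fix x assume x: "t \<le> x" "x \<le> s"
        have x0: "x > 0" "x \<ge> T" using x tT T_pos by auto
        have bx: "b x > 0" using pos x0 by auto
        have d1: "((\<lambda>x. 1 / b x) has_real_derivative (0 * b x - 1 * b' x) / (b x * b x)) (at x)"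
          using DERIV_divide[OF DERIV_const[of 1 "at x"] der_at[OF deriv_b]] x0 bx by auto
        have dR: "(R has_real_derivative ((0 * b x - 1 * b' x) / (b x * b x) + 1)) (at x)"
          unfolding R_def[abs_def] using DERIV_add[OF d1 DERIV_ident] by simp
        have "b' x / (b x)\<^sup>2 \<le> \<bar>b' x\<bar> / (b x)\<^sup>2"
          by (rule divide_right_mono) auto
        then have "b' x / (b x * b x) \<le> 1" using bT[OF x0(2)] c_01 by (simp add: power2_eq_square)
        then have "(0 * b x - 1 * b' x) / (b x * b x) + 1 \<ge> 0" by simp
        then show "\<exists>y. (R has_real_derivative y) (at x) \<and> 0 \<le> y" using dR by blast
      qed
      then show ?thesis unfolding R_def by simp
    qed
    have b_le: "b s \<le> 2 * b t" if s: "t \<le> s" "s \<le> t + h" for s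
    proof -
      have bs: "b s > 0" using pos s t0 by simp
      have "1 / b t - h \<le> 1 / b s" using inv_b[OF s(1)] s(2) by linarith
      moreover have "1 / b t - h = 1 / (2 * b t)" unfolding h_def using bt by (simp add: field_simps)
      ultimately have "1 / (2 * b t) \<le> 1 / b s" by simp
      then show ?thesis using bs bt by (simp add: field_simps)
    qed
    have E_ge: "E t * exp (-1) \<le> E s" if s: "t \<le> s" "s \<le> t + h" for s
    proof -
      define Q where "Q x = B x - 2 * b t * x" for x
      have "Q s \<le> Q t"
      proof (rule DERIV_nonpos_imp_nonincreasing[OF s(1)])
        fix x assume x: "t \<le> x" "x \<le> s"
        have x0: "x > 0" using x tT T_pos by auto
        have dQ: "(Q has_real_derivative (b x - 2 * b t)) (at x)"
          unfolding Q_def[abs_def] using DERIV_diff[OF der_at[OF B_der] DERIV_cmult[OF DERIV_ident, where c="2 * b t" and x=x and s=UNIV]] x0 by simp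
        have "b x - 2 * b t \<le> 0" using b_le[of x] x s by simp
        then show "\<exists>y. (Q has_real_derivative y) (at x) \<and> y \<le> 0" using dQ by blast
      qed
      then have "B s - B t \<le> 2 * b t * (s - t)" unfolding Q_def by (simp add: algebra_simps)
      also have "\<dots> \<le> 2 * b t * h" using s bt by (intro mult_left_mono) auto
      also have "\<dots> = 1" unfolding h_def using bt by simp
      finally have "- B t - 1 \<le> - B s" by simp
      then have "exp (- B t - 1) \<le> exp (- B s)" by simp
      then show ?thesis unfolding E_def by (simp add: exp_diff exp_minus field_simps)
    qed
    have "integral {t..t+h} (\<lambda>_. E t * exp (-1)) \<le> integral {t..t+h} E"
      by (rule integral_le) (use intE[OF t0] E_ge in auto)
    also have "\<dots> \<le> integral {t..} E"
      by (rule integral_subset_le) (use intE[OF t0] intE_inf[OF t0] E_pos in \<open>auto simp: less_imp_le\<close>)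
    finally have "h * (E t * exp (-1)) \<le> integral {t..} E" using h_pos by (simp add: mult_ac)
    then have "exp (B t) * (h * (E t * exp (-1))) \<le> Phi b t"
      unfolding Phi_eq[OF t0] tail[OF t0, symmetric] by (rule mult_left_mono) simp
    moreover have "exp (B t) * (h * (E t * exp (-1))) = (exp (-1) / 2) / b t"
      using EB[of t] unfolding h_def by (simp add: field_simps)
    ultimately show ?thesis by simp
  qed

  define R0 where "R0 = (1 + b0) / (1 - b0)"
  have R0_ge: "1 \<le> R0" unfolding R0_def using b0_01 by (simp add: field_simps)
  have R0_eq: "1 / (1 - c) - 1 = R0" unfolding R0_def c_def using b0_01 by (simp add: field_simps)
  have dbound: "\<bar>b t * Phi b t - 1\<bar> \<le> R0" if tT: "t \<ge> T" for t
  proof -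
    have bt: "b t > 0" using pos tT T_pos by simp
    have "exp (-1) / 2 / b t > 0" using bt by simp
    then have "0 \<le> Phi b t" using lower[OF tT] by linarith
    then have l: "0 \<le> b t * Phi b t" using bt by simp
    have "b t * Phi b t \<le> b t * ((1 / (1 - c)) / b t)" using upper[OF tT] bt by (intro mult_left_mono) auto
    then have u: "b t * Phi b t \<le> 1 / (1 - c)" using bt by simp
    show ?thesis using l u R0_eq R0_ge by linarith
  qed
  have contP: "continuous_on {0..} (Phi b)" by (rule DERIV_continuous_on[OF Phi_der]) auto
  have "continuous_on {0..T} (\<lambda>t. b t * Phi b t - 1)"
    by (intro continuous_intros continuous_on_subset[OF contb] continuous_on_subset[OF contP]) auto
  then have "compact ((\<lambda>t. b t * Phi b t - 1) ` {0..T})" by (rule compact_continuous_image) simp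
  then have "bounded ((\<lambda>t. b t * Phi b t - 1) ` {0..T})" by (rule compact_imp_bounded)
  then obtain a where "\<forall>y\<in>(\<lambda>t. b t * Phi b t - 1) ` {0..T}. \<bar>y\<bar> \<le> a"
    unfolding bounded_real by blast
  then have a: "\<And>t. t \<in> {0..T} \<Longrightarrow> \<bar>b t * Phi b t - 1\<bar> \<le> a" by blast
  have part_last: "\<exists>M. \<forall>t\<ge>0. \<forall>D. (Phi b has_real_derivative D) (at t within {0..}) \<longrightarrow> \<bar>D\<bar> \<le> M"
  proof (intro exI allI impI)
    fix t D :: real assume t0: "t \<ge> 0" and dD: "(Phi b has_real_derivative D) (at t within {0..})"
    have "D = b t * Phi b t - 1"
      by (rule has_field_derivative_unique[OF dD Phi_der[OF t0] at_Ici_nontriv[OF t0]])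
    then show "\<bar>D\<bar> \<le> max a R0"
      using a[of t] dbound[of t] t0 by (cases "t \<le> T") auto
  qed
  have part4: "\<exists>t0>0. \<exists>B1>0. \<exists>B2>0.
         (\<forall>t\<ge>t0. B1 / b t \<le> Phi b t \<and> Phi b t \<le> B2 / b t)
       \<and> (\<forall>t\<ge>t0. \<bar>deriv (Phi b) t\<bar> \<le> (1 + real_of_ereal (b0_ereal b b')) / (1 - real_of_ereal (b0_ereal b b')))"
  proof (intro exI conjI allI impI)
    show "T > 0" "exp (-1) / 2 > (0::real)" "1 / (1 - c) > 0" using T_pos c_01 by auto
  next
    fix t assume tT: "T \<le> t"
    show "exp (- 1) / 2 / b t \<le> Phi b t" by (rule lower[OF tT])
    show "Phi b t \<le> 1 / (1 - c) / b t" by (rule upper[OF tT])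
  next
    fix t assume tT: "T \<le> t"
    have "deriv (Phi b) t = b t * Phi b t - 1"
      by (rule DERIV_imp_deriv, rule der_at[OF Phi_der]) (use tT T_pos in auto)
    then show "\<bar>deriv (Phi b) t\<bar> \<le> (1 + real_of_ereal (b0_ereal b b')) / (1 - real_of_ereal (b0_ereal b b'))"
      using dbound[OF tT] unfolding R0_def b0_def by simp
  qed
  have part2: "Phi b 0 = integral {0..} (\<lambda>s. exp (- integral {0..s} b))" unfolding Phi_def by simp
  show ?thesis
    by (intro conjI allI impI part1 Phi_der part4 part_last part2)
qed

end
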